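(* For every $k \geq 4$, there exists an even polynomial $p \in \Delta_k$ such that $x_1^2x_2^2 \cdots x_k^2$ divides $p$ and $(1,0,\ldots,0)$ is a bad point for $p$.
   Context: $P_k$ is the set of homogeneous polynomials in $\mathbb{R}[x_1,\ldots,x_k]$ taking only non-negative values on $\mathbb{R}^k$; $\Sigma_k$ is the set of homogeneous polynomials in $k$ variables that are sums of squares of polynomials with real coefficients; $\Delta_k=P_k\setminus\Sigma_k$. A polynomial is even if every variable appears with even exponent in every monomial. A point $x_0\in\mathbb{R}^k$ is a bad point for $p\in P_k$ if $q(x_0)=0$ for every polynomial $q\in\mathbb{R}[x_1,\ldots,x_k]$ such that $q^2p\in\Sigma_k$. *)

theory Defs
  imports Complex_Main "HOL-Library.Poly_Mapping"
begin

text \<open>Real multivariate polynomials: maps from monomials (exponent vectors,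
  variable i is x_(i+1)) to real coefficients, finitely supported.
  Ring operations come from HOL-Library.Poly_Mapping.\<close>

type_synonym mpoly = "(nat \<Rightarrow>\<^sub>0 nat) \<Rightarrow>\<^sub>0 real"

definition mvar :: "nat \<Rightarrow> mpoly" where
  "mvar i = Poly_Mapping.single (Poly_Mapping.single i 1) 1"

definition mdeg :: "(nat \<Rightarrow>\<^sub>0 nat) \<Rightarrow> nat" where
  "mdeg m = sum (Poly_Mapping.lookup m) (Poly_Mapping.keys m)"

definition in_vars :: "nat \<Rightarrow> mpoly \<Rightarrow> bool" where
  "in_vars k p \<longleftrightarrow> (\<forall>m\<in>Poly_Mapping.keys p. Poly_Mapping.keys m \<subseteq> {..<k})"

definition homogeneous :: "mpoly \<Rightarrow> bool" where
  "homogeneous p \<longleftrightarrow> (\<exists>d. \<forall>m\<in>Poly_Mapping.keys p. mdeg m = d)"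

definition meval :: "mpoly \<Rightarrow> (nat \<Rightarrow> real) \<Rightarrow> real" where
  "meval p x = (\<Sum>m\<in>Poly_Mapping.keys p. Poly_Mapping.lookup p m * (\<Prod>i\<in>Poly_Mapping.keys m. x i ^ Poly_Mapping.lookup m i))"

definition Pk :: "nat \<Rightarrow> mpoly \<Rightarrow> bool" where
  "Pk k p \<longleftrightarrow> in_vars k p \<and> homogeneous p \<and> (\<forall>x. 0 \<le> meval p x)"

definition Sigmak :: "nat \<Rightarrow> mpoly \<Rightarrow> bool" where
  "Sigmak k p \<longleftrightarrow> in_vars k p \<and> homogeneous p \<and>
     (\<exists>qs. (\<forall>q\<in>set qs. in_vars k q) \<and> p = sum_list (map (\<lambda>q. q ^ 2) qs))"

definition Deltak :: "nat \<Rightarrow> mpoly \<Rightarrow> bool" where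
  "Deltak k p \<longleftrightarrow> Pk k p \<and> \<not> Sigmak k p"

definition even_poly :: "mpoly \<Rightarrow> bool" where
  "even_poly p \<longleftrightarrow> (\<forall>m\<in>Poly_Mapping.keys p. \<forall>i. even (Poly_Mapping.lookup m i))"

definition bad_point :: "nat \<Rightarrow> mpoly \<Rightarrow> (nat \<Rightarrow> real) \<Rightarrow> bool" where
  "bad_point k p x0 \<longleftrightarrow> Pk k p \<and>
     (\<forall>q. in_vars k q \<and> Sigmak k (q ^ 2 * p) \<longrightarrow> meval q x0 = 0)"

end

theory Submission
  imports Defs
begin

lemma coeff_mult:
  fixes f g :: mpoly
  assumes "finite A" "Poly_Mapping.keys f \<subseteq> A" "finite B" "Poly_Mapping.keys g \<subseteq> B"
  shows "Poly_Mapping.lookup (f*g) \<mu> = (\<Sum>a\<in>A. \<Sum>b\<in>B. (Poly_Mapping.lookup f a * Poly_Mapping.lookup g b when \<mu> = a + b))"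
proof -
  have inner: "(\<Sum>q. Poly_Mapping.lookup g q when \<mu> = l + q) = (\<Sum>b\<in>B. Poly_Mapping.lookup g b when \<mu> = l + b)" for l
    by (rule Sum_any.expand_superset) (use assms in \<open>auto simp: in_keys_iff\<close>)
  have "Poly_Mapping.lookup (f*g) \<mu> = (\<Sum>l. Poly_Mapping.lookup f l * (\<Sum>b\<in>B. Poly_Mapping.lookup g b when \<mu> = l + b))"
    unfolding lookup_mult inner ..
  also have "\<dots> = (\<Sum>a\<in>A. Poly_Mapping.lookup f a * (\<Sum>b\<in>B. Poly_Mapping.lookup g b when \<mu> = a + b))"
    by (rule Sum_any.expand_superset) (use assms in \<open>auto simp: in_keys_iff\<close>)
  also have "\<dots> = (\<Sum>a\<in>A. \<Sum>b\<in>B. (Poly_Mapping.lookup f a * Poly_Mapping.lookup g b when \<mu> = a + b))"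
    by (simp add: sum_distrib_left mult_when)
  finally show ?thesis .
qed

lemma sq_coeff:
  fixes g :: mpoly
  shows "Poly_Mapping.lookup (g^2) \<mu> = (\<Sum>a\<in>Poly_Mapping.keys g. \<Sum>b\<in>Poly_Mapping.keys g. (Poly_Mapping.lookup g a * Poly_Mapping.lookup g b when \<mu> = a + b))"
  unfolding power2_eq_square by (rule coeff_mult) auto

lemma lookup_sum_list: "Poly_Mapping.lookup (sum_list xs) m = sum_list (map (\<lambda>x. Poly_Mapping.lookup x m) xs)"
  by (induct xs) (auto simp: lookup_add)

definition face :: "((nat \<Rightarrow>\<^sub>0 nat) \<Rightarrow> int) \<Rightarrow> int \<Rightarrow> mpoly \<Rightarrow> mpoly" where
  "face w V f = Abs_poly_mapping (\<lambda>m. Poly_Mapping.lookup f m when w m = V)"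

lemma lookup_face: "Poly_Mapping.lookup (face w V f) m = (Poly_Mapping.lookup f m when w m = V)"
proof -
  have "finite {m. (Poly_Mapping.lookup f m when w m = V) \<noteq> 0}"
    by (rule finite_subset[of _ "Poly_Mapping.keys f"]) (auto simp: in_keys_iff)
  then show ?thesis unfolding face_def by simp
qed

lemma keys_face: "Poly_Mapping.keys (face w V f) \<subseteq> Poly_Mapping.keys f"
  by (auto simp: in_keys_iff lookup_face)

lemma keys_face_w: "m \<in> Poly_Mapping.keys (face w V f) \<Longrightarrow> w m = V"
  by (auto simp: in_keys_iff lookup_face)

lemma face_add: "face w V (f + g) = face w V f + face w V g"
  by (rule poly_mapping_eqI) (simp add: lookup_face lookup_add when_add_distrib)

lemma face_zero: "face w V 0 = 0"
  by (rule poly_mapping_eqI) (simp add: lookup_face)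

lemma face_mult:
  assumes add: "\<And>x y. w (x+y) = w x + w y"
    and f: "\<forall>a\<in>Poly_Mapping.keys f. w a \<le> U" and g: "\<forall>b\<in>Poly_Mapping.keys g. w b \<le> U'"
  shows "face w (U+U') (f*g) = face w U f * face w U' g"
proof (rule poly_mapping_eqI)
  fix \<mu>
  have L: "Poly_Mapping.lookup (face w (U+U') (f*g)) \<mu> = ((\<Sum>a\<in>Poly_Mapping.keys f. \<Sum>b\<in>Poly_Mapping.keys g. (Poly_Mapping.lookup f a * Poly_Mapping.lookup g b when \<mu> = a + b)) when w \<mu> = U + U')"
    unfolding lookup_face by (subst coeff_mult[of "Poly_Mapping.keys f" _ "Poly_Mapping.keys g"]) auto
  have R: "Poly_Mapping.lookup (face w U f * face w U' g) \<mu> = (\<Sum>a\<in>Poly_Mapping.keys f. \<Sum>b\<in>Poly_Mapping.keys g. ((Poly_Mapping.lookup f a when w a = U) * (Poly_Mapping.lookup g b when w b = U') when \<mu> = a + b))"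
    by (subst coeff_mult[of "Poly_Mapping.keys f" _ "Poly_Mapping.keys g"]) (auto simp: lookup_face keys_face[THEN subsetD])
  show "Poly_Mapping.lookup (face w (U+U') (f*g)) \<mu> = Poly_Mapping.lookup (face w U f * face w U' g) \<mu>"
  proof (cases "w \<mu> = U + U'")
    case True
    show ?thesis unfolding L R
    proof (simp add: True, intro sum.cong refl)
      fix a b assume a: "a \<in> Poly_Mapping.keys f" and b: "b \<in> Poly_Mapping.keys g"
      show "(Poly_Mapping.lookup f a * Poly_Mapping.lookup g b when \<mu> = a + b) =
            ((Poly_Mapping.lookup f a when w a = U) * (Poly_Mapping.lookup g b when w b = U') when \<mu> = a + b)"
      proof (cases "\<mu> = a + b")
        case True
        then have "w a + w b = U + U'" using \<open>w \<mu> = U + U'\<close> add by simp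
        with f g a b have "w a = U" "w b = U'" by force+
        then show ?thesis by simp
      qed simp
    qed
  next
    case False
    have "((Poly_Mapping.lookup f a when w a = U) * (Poly_Mapping.lookup g b when w b = U') when \<mu> = a + b) = 0" for a b
      using False add by (auto simp: when_def)
    then show ?thesis unfolding L R using False by simp
  qed
qed

lemma face_sumsq:
  assumes add: "\<And>x y. w (x+y) = w x + w y"
    and h: "\<forall>g\<in>set gs. \<forall>m\<in>Poly_Mapping.keys g. w m \<le> V"
  shows "face w (V+V) (sum_list (map (\<lambda>q. q^2) gs)) = sum_list (map (\<lambda>q. (face w V q)^2) gs)"
  using h
proof (induct gs)
  case Nil then show ?case by (simp add: face_zero)
next
  case (Cons g gs)
  have "face w (V+V) (g*g) = face w V g * face w V g"
    by (rule face_mult[OF add]) (use Cons in auto)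
  then show ?case using Cons by (simp add: face_add power2_eq_square)
qed

lemma sq_coeff_nonneg:
  fixes g :: mpoly
  assumes "\<forall>a\<in>Poly_Mapping.keys g. \<forall>b\<in>Poly_Mapping.keys g. a + b = \<mu> \<longrightarrow> a = b"
  shows "0 \<le> Poly_Mapping.lookup (g^2) \<mu>"
  unfolding sq_coeff
  by (intro sum_nonneg) (use assms in \<open>auto simp: when_def\<close>)

lemma pair_nonneg:
  fixes gs :: "mpoly list"
  assumes "\<forall>g\<in>set gs. \<forall>a\<in>Poly_Mapping.keys g. \<forall>b\<in>Poly_Mapping.keys g. a + b = \<mu> \<longrightarrow> a = b"
  shows "0 \<le> Poly_Mapping.lookup (sum_list (map (\<lambda>q. q^2) gs)) \<mu>"
  using assms
proof (induct gs)
  case (Cons g gs)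
  then show ?case using sq_coeff_nonneg[of g \<mu>] by (simp add: lookup_add)
qed simp

lemma sumsq_pos:
  fixes gs :: "mpoly list"
  assumes "g \<in> set gs" "m \<in> Poly_Mapping.keys g"
  shows "0 < sum_list (map (\<lambda>q. (Poly_Mapping.lookup q m)^2) gs)"
  using assms
proof (induct gs)
  case (Cons h gs)
  have nn: "0 \<le> sum_list (map (\<lambda>q. (Poly_Mapping.lookup q m)^2) gs)"
    by (induct gs) auto
  show ?case
  proof (cases "g = h")
    case True
    then have "0 < (Poly_Mapping.lookup h m)^2" using Cons.prems by (simp add: in_keys_iff)
    then have "0 < (Poly_Mapping.lookup h m)^2 + sum_list (map (\<lambda>q. (Poly_Mapping.lookup q m)^2) gs)"
      using nn by (rule add_pos_nonneg)
    then show ?thesis by simp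
  next
    case False
    then show ?thesis using Cons by (simp add: add_nonneg_pos)
  qed
qed simp

lemma convex_mono:
  fixes a b c :: "nat \<Rightarrow>\<^sub>0 nat"
  assumes K: "finite K" "Poly_Mapping.keys a \<subseteq> K" "Poly_Mapping.keys b \<subseteq> K" "Poly_Mapping.keys c \<subseteq> K"
    and abc: "a + b = c + c"
    and le: "(\<Sum>i\<in>K. (int (Poly_Mapping.lookup a i))^2) \<le> (\<Sum>i\<in>K. (int (Poly_Mapping.lookup c i))^2)"
            "(\<Sum>i\<in>K. (int (Poly_Mapping.lookup b i))^2) \<le> (\<Sum>i\<in>K. (int (Poly_Mapping.lookup c i))^2)"
  shows "a = c"
proof -
  define A where "A i = int (Poly_Mapping.lookup a i)" for i
  define B where "B i = int (Poly_Mapping.lookup b i)" for i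
  define C where "C i = int (Poly_Mapping.lookup c i)" for i
  have pt: "A i + B i = 2 * C i" for i
    using arg_cong[OF abc, of "\<lambda>x. Poly_Mapping.lookup x i"] unfolding A_def B_def C_def by (simp add: lookup_add)
  have trm: "(A i - B i)^2 = 2 * (A i)^2 + 2 * (B i)^2 - 4 * (C i)^2" for i
  proof -
    have 1: "(A i + B i)^2 = (2 * C i)^2" by (simp only: pt)
    have 2: "(A i - B i)^2 = 2 * (A i)^2 + 2 * (B i)^2 - (A i + B i)^2" by (simp add: power2_eq_square algebra_simps)
    show ?thesis unfolding 2 1 by (simp add: power2_eq_square)
  qed
  have eq: "(\<Sum>i\<in>K. (A i - B i)^2) = 2 * (\<Sum>i\<in>K. (A i)^2) + 2 * (\<Sum>i\<in>K. (B i)^2) - 4 * (\<Sum>i\<in>K. (C i)^2)"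
    unfolding trm by (simp only: sum_subtractf sum.distrib sum_distrib_left)
  have le': "(\<Sum>i\<in>K. (A i)^2) \<le> (\<Sum>i\<in>K. (C i)^2)" "(\<Sum>i\<in>K. (B i)^2) \<le> (\<Sum>i\<in>K. (C i)^2)"
    using le unfolding A_def B_def C_def by auto
  have s0: "(\<Sum>i\<in>K. (A i - B i)^2) \<le> 0"
    using eq le' by linarith
  have "\<forall>i\<in>K. (A i - B i)^2 = 0"
  proof
    fix i assume "i \<in> K"
    have "(A i - B i)^2 \<le> (\<Sum>i\<in>K. (A i - B i)^2)"
      by (rule member_le_sum) (use \<open>i \<in> K\<close> K(1) in auto)
    then show "(A i - B i)^2 = 0" using s0 by (metis antisym zero_le_power2 order_trans)
  qed
  then have z: "\<forall>i\<in>K. A i = B i" by auto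
  show ?thesis
  proof (rule poly_mapping_eqI)
    fix i
    show "Poly_Mapping.lookup a i = Poly_Mapping.lookup c i"
    proof (cases "i \<in> K")
      case True
      then have "A i = C i" using z pt[of i] by auto
      then show ?thesis unfolding A_def C_def by simp
    next
      case False
      then have "i \<notin> Poly_Mapping.keys a" "i \<notin> Poly_Mapping.keys c" using K by blast+
      then show ?thesis by (simp add: in_keys_iff)
    qed
  qed
qed

lemma newton:
  fixes gs :: "mpoly list" and w :: "(nat \<Rightarrow>\<^sub>0 nat) \<Rightarrow> int"
  assumes add: "\<And>x y. w (x+y) = w x + w y"
    and F: "\<forall>s\<in>Poly_Mapping.keys (sum_list (map (\<lambda>q. q^2) gs)). w s \<le> T"
    and g: "g \<in> set gs" "m \<in> Poly_Mapping.keys g"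
  shows "2 * w m \<le> T"
proof -
  define S where "S = (\<Union>g\<in>set gs. Poly_Mapping.keys g)"
  have finS: "finite S" unfolding S_def by auto
  have mS: "m \<in> S" using g unfolding S_def by auto
  define W where "W = Max (w ` S)"
  have wle: "\<forall>x\<in>S. w x \<le> W" unfolding W_def using finS by auto
  have "W \<in> w ` S" unfolding W_def using finS mS by (intro Max_in) auto
  define SW where "SW = {x\<in>S. w x = W}"
  have SWne: "SW \<noteq> {}" using \<open>W \<in> w ` S\<close> unfolding SW_def by auto
  have finSW: "finite SW" using finS unfolding SW_def by auto
  define K where "K = (\<Union>x\<in>S. Poly_Mapping.keys x)"
  have finK: "finite K" unfolding K_def using finS by auto
  define nf where "nf x = (\<Sum>i\<in>K. (int (Poly_Mapping.lookup x i))^2)" for x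
  have "Max (nf ` SW) \<in> nf ` SW" using finSW SWne by (intro Max_in) auto
  then obtain ms where ms: "ms \<in> SW" "nf ms = Max (nf ` SW)" by auto
  have msmax: "\<forall>x\<in>SW. nf x \<le> nf ms" using ms finSW by auto
  have conv: "a = ms" if "a \<in> SW" "b \<in> SW" "a + b = ms + ms" for a b
    by (rule convex_mono[OF finK _ _ _ that(3)]) (use that ms msmax in \<open>auto simp: K_def SW_def nf_def\<close>)
  have coeff: "Poly_Mapping.lookup (g^2) (ms+ms) = (Poly_Mapping.lookup g ms)^2" if gin: "g \<in> set gs" for g
  proof -
    have kS: "Poly_Mapping.keys g \<subseteq> S" using gin unfolding S_def by auto
    have "Poly_Mapping.lookup (g^2) (ms+ms) = (\<Sum>a\<in>Poly_Mapping.keys g. \<Sum>b\<in>Poly_Mapping.keys g. (if a = ms \<and> b = ms then Poly_Mapping.lookup g a * Poly_Mapping.lookup g b else 0))"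
      unfolding sq_coeff
    proof (intro sum.cong refl)
      fix a b assume a: "a \<in> Poly_Mapping.keys g" and b: "b \<in> Poly_Mapping.keys g"
      show "(Poly_Mapping.lookup g a * Poly_Mapping.lookup g b when ms + ms = a + b) =
         (if a = ms \<and> b = ms then Poly_Mapping.lookup g a * Poly_Mapping.lookup g b else 0)"
      proof (cases "ms + ms = a + b")
        case True
        have "w a + w b = W + W" using True add ms(1) unfolding SW_def by (metis (mono_tags, lifting) mem_Collect_eq)
        moreover have "w a \<le> W" "w b \<le> W" using wle kS a b by auto
        ultimately have "a \<in> SW" "b \<in> SW" using kS a b unfolding SW_def by auto
        then have "a = ms" "b = ms" using conv True by (auto simp: add.commute)
        then show ?thesis by simp
      next
        case False
        then show ?thesis by auto
      qed
    qed
    also have "\<dots> = (Poly_Mapping.lookup g ms)^2"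
    proof (cases "ms \<in> Poly_Mapping.keys g")
      case True
      have inner: "(\<Sum>b\<in>Poly_Mapping.keys g. if a = ms \<and> b = ms then Poly_Mapping.lookup g a * Poly_Mapping.lookup g b else 0)
         = (if a = ms then Poly_Mapping.lookup g a * Poly_Mapping.lookup g a else 0)" for a
        using True by (cases "a = ms") (simp_all add: sum.delta')
      show ?thesis unfolding inner using True by (simp add: sum.delta' power2_eq_square)
    next
      case False
      then have "(\<Sum>a\<in>Poly_Mapping.keys g. \<Sum>b\<in>Poly_Mapping.keys g. (if a = ms \<and> b = ms then Poly_Mapping.lookup g a * Poly_Mapping.lookup g b else 0)) = 0"
        by (intro sum.neutral ballI) auto
      then show ?thesis using False by (simp add: in_keys_iff)
    qed
    finally show ?thesis .
  qed
  have "Poly_Mapping.lookup (sum_list (map (\<lambda>q. q^2) gs)) (ms+ms) = sum_list (map (\<lambda>q. (Poly_Mapping.lookup q ms)^2) gs)"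
    unfolding lookup_sum_list map_map using coeff by (intro arg_cong[where f=sum_list] map_cong) auto
  moreover obtain g0 where "g0 \<in> set gs" "ms \<in> Poly_Mapping.keys g0" using ms(1) unfolding SW_def S_def by auto
  ultimately have "Poly_Mapping.lookup (sum_list (map (\<lambda>q. q^2) gs)) (ms+ms) \<noteq> 0"
    using sumsq_pos by (metis less_irrefl)
  then have "w (ms+ms) \<le> T" using F by (auto simp: in_keys_iff)
  moreover have "w ms = W" using ms(1) unfolding SW_def by auto
  moreover have "w m \<le> W" using wle mS by auto
  ultimately show ?thesis using add by simp
qed

lemma mdeg_superset:
  assumes "finite K" "Poly_Mapping.keys m \<subseteq> K"
  shows "mdeg m = (\<Sum>i\<in>K. Poly_Mapping.lookup m i)"
  unfolding mdeg_def by (rule sum.mono_neutral_left) (use assms in \<open>auto simp: in_keys_iff\<close>)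

lemma mdeg_add: "mdeg (a + b) = mdeg a + mdeg b"
proof -
  let ?K = "Poly_Mapping.keys a \<union> Poly_Mapping.keys b"
  have "mdeg (a + b) = (\<Sum>i\<in>?K. Poly_Mapping.lookup (a+b) i)"
    by (rule mdeg_superset) (auto dest: keys_add[THEN subsetD])
  also have "\<dots> = (\<Sum>i\<in>?K. Poly_Mapping.lookup a i) + (\<Sum>i\<in>?K. Poly_Mapping.lookup b i)"
    by (simp add: lookup_add sum.distrib)
  also have "\<dots> = mdeg a + mdeg b"
    by (subst (1 2) mdeg_superset[of ?K]) auto
  finally show ?thesis .
qed

lemma mdeg_single: "mdeg (Poly_Mapping.single i n) = n"
  unfolding mdeg_def by simp

lemma mdeg_zero: "mdeg 0 = 0"
  unfolding mdeg_def by simp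

definition mono :: "(nat \<Rightarrow>\<^sub>0 nat) \<Rightarrow> (nat \<Rightarrow> real) \<Rightarrow> real" where
  "mono m x = (\<Prod>i\<in>Poly_Mapping.keys m. x i ^ Poly_Mapping.lookup m i)"

lemma mono_superset:
  assumes "finite K" "Poly_Mapping.keys m \<subseteq> K"
  shows "mono m x = (\<Prod>i\<in>K. x i ^ Poly_Mapping.lookup m i)"
  unfolding mono_def by (rule prod.mono_neutral_left) (use assms in \<open>auto simp: in_keys_iff\<close>)

lemma mono_add: "mono (a + b) x = mono a x * mono b x"
proof -
  let ?K = "Poly_Mapping.keys a \<union> Poly_Mapping.keys b"
  have "mono (a + b) x = (\<Prod>i\<in>?K. x i ^ Poly_Mapping.lookup (a+b) i)"
    by (rule mono_superset) (auto dest: keys_add[THEN subsetD])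
  also have "\<dots> = (\<Prod>i\<in>?K. x i ^ Poly_Mapping.lookup a i) * (\<Prod>i\<in>?K. x i ^ Poly_Mapping.lookup b i)"
    by (simp add: lookup_add power_add prod.distrib)
  also have "\<dots> = mono a x * mono b x"
    by (subst (1 2) mono_superset[of ?K]) auto
  finally show ?thesis .
qed

lemma mono_single: "mono (Poly_Mapping.single i n) x = x i ^ n"
  unfolding mono_def by simp

lemma meval_single: "meval (Poly_Mapping.single m c) x = c * mono m x"
  unfolding meval_def mono_def by simp

lemma meval_add: "meval (f + g) x = meval f x + meval g x"
  unfolding meval_def
  by (rule setsum_keys_plus_distrib[where f="\<lambda>m v. v * (\<Prod>i\<in>Poly_Mapping.keys m. x i ^ Poly_Mapping.lookup m i)"])
     (auto simp: algebra_simps)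

lemma keys_single_mult:
  "Poly_Mapping.keys (Poly_Mapping.single M v * f) \<subseteq> (\<lambda>n. M + n) ` Poly_Mapping.keys f"
  using keys_mult[of "Poly_Mapping.single M v" f] by (auto split: if_splits)

lemma lookup_single_mult:
  fixes f :: mpoly
  shows "Poly_Mapping.lookup (Poly_Mapping.single M v * f) (M + n) = v * Poly_Mapping.lookup f n"
proof -
  have "Poly_Mapping.lookup (Poly_Mapping.single M v * f) (M + n) =
     (\<Sum>a\<in>{M}. \<Sum>b\<in>Poly_Mapping.keys f. (Poly_Mapping.lookup (Poly_Mapping.single M v) a * Poly_Mapping.lookup f b when M + n = a + b))"
    by (rule coeff_mult) auto
  also have "\<dots> = (\<Sum>b\<in>Poly_Mapping.keys f. (v * Poly_Mapping.lookup f b when b = n))"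
    by (simp add: when_def)
  also have "\<dots> = v * Poly_Mapping.lookup f n"
    by (cases "n \<in> Poly_Mapping.keys f") (auto simp: when_def sum.delta' in_keys_iff)
  finally show ?thesis .
qed

lemma real_choi_lam:
  fixes X Y Z :: real
  assumes "0 \<le> X" "0 \<le> Y" "0 \<le> Z"
  shows "0 \<le> X^2*Y + Y^2*Z + Z^2*X - 3*X*Y*Z"
proof -
  have e1: "X^2*Y + Y^2*Z + Z^2*X - 3*X*Y*Z = Y*(X-Z)^2 + Z*((Y-X)*(Y-Z))" by algebra
  have e2: "X^2*Y + Y^2*Z + Z^2*X - 3*X*Y*Z = Z*(Y-X)^2 + X*((Z-Y)*(Z-X))" by algebra
  have e3: "X^2*Y + Y^2*Z + Z^2*X - 3*X*Y*Z = X*(Z-Y)^2 + Y*((X-Z)*(X-Y))" by algebra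
  consider "Y \<ge> X \<and> Y \<ge> Z" | "Z \<ge> X \<and> Z \<ge> Y" | "X \<ge> Y \<and> X \<ge> Z" by linarith
  then show ?thesis
  proof cases
    case 1
    then have "0 \<le> (Y-X)*(Y-Z)" by simp
    then show ?thesis unfolding e1 using assms by simp
  next
    case 2
    then have "0 \<le> (Z-Y)*(Z-X)" by simp
    then show ?thesis unfolding e2 using assms by simp
  next
    case 3
    then have "0 \<le> (X-Z)*(X-Y)" by simp
    then show ?thesis unfolding e3 using assms by simp
  qed
qed

definition ma :: "nat \<Rightarrow>\<^sub>0 nat" where "ma = Poly_Mapping.single 1 4 + Poly_Mapping.single 2 2"
definition mb :: "nat \<Rightarrow>\<^sub>0 nat" where "mb = Poly_Mapping.single 2 4 + Poly_Mapping.single 3 2"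
definition mc :: "nat \<Rightarrow>\<^sub>0 nat" where "mc = Poly_Mapping.single 3 4 + Poly_Mapping.single 1 2"
definition md :: "nat \<Rightarrow>\<^sub>0 nat" where "md = Poly_Mapping.single 1 2 + Poly_Mapping.single 2 2 + Poly_Mapping.single 3 2"
definition rr :: mpoly where
  "rr = Poly_Mapping.single ma 1 + Poly_Mapping.single mb 1 + Poly_Mapping.single mc 1 + Poly_Mapping.single md (-3)"
definition Ek :: "nat \<Rightarrow> nat \<Rightarrow>\<^sub>0 nat" where "Ek k = (\<Sum>i<k. Poly_Mapping.single i 2)"

lemma lookup_ma: "Poly_Mapping.lookup ma i = (if i = 1 then 4 else if i = 2 then 2 else 0)"
  by (simp add: ma_def lookup_add lookup_single when_def)
lemma lookup_mb: "Poly_Mapping.lookup mb i = (if i = 2 then 4 else if i = 3 then 2 else 0)"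
  by (simp add: mb_def lookup_add lookup_single when_def)
lemma lookup_mc: "Poly_Mapping.lookup mc i = (if i = 3 then 4 else if i = 1 then 2 else 0)"
  by (simp add: mc_def lookup_add lookup_single when_def)
lemma lookup_md: "Poly_Mapping.lookup md i = (if i \<in> {1,2,3} then 2 else 0)"
  by (simp add: md_def lookup_add lookup_single when_def)
lemma lookup_Ek: "Poly_Mapping.lookup (Ek k) i = (if i < k then 2 else 0)"
  by (simp add: Ek_def lookup_sum lookup_single when_def)

lemma mons_distinct: "ma \<noteq> md" "mb \<noteq> md" "mc \<noteq> md"
proof -
  show "ma \<noteq> md"
  proof
    assume "ma = md" then have "Poly_Mapping.lookup ma 1 = Poly_Mapping.lookup md 1" by simp
    then show False by (simp add: lookup_ma lookup_md)
  qed
  show "mb \<noteq> md"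
  proof
    assume "mb = md" then have "Poly_Mapping.lookup mb 1 = Poly_Mapping.lookup md 1" by simp
    then show False by (simp add: lookup_mb lookup_md)
  qed
  show "mc \<noteq> md"
  proof
    assume "mc = md" then have "Poly_Mapping.lookup mc 2 = Poly_Mapping.lookup md 2" by simp
    then show False by (simp add: lookup_mc lookup_md)
  qed
qed

lemma keys_rr: "Poly_Mapping.keys rr \<subseteq> {ma, mb, mc, md}"
  by (auto simp: rr_def in_keys_iff lookup_add lookup_single when_def split: if_splits)

lemma lookup_rr_md: "Poly_Mapping.lookup rr md = -3"
  using mons_distinct by (simp add: rr_def lookup_add lookup_single when_def)

lemma mdeg_Ek: "mdeg (Ek k) = 2 * k"
  by (induct k) (simp_all add: Ek_def mdeg_add mdeg_single mdeg_zero)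

lemma mono_zero: "mono 0 x = 1"
  by (simp add: mono_def)

lemma mono_Ek: "mono (Ek k) x = (\<Prod>i<k. x i ^ 2)"
  by (induct k) (simp_all add: Ek_def mono_add mono_single mono_zero)

lemma prod_mvar: "(\<Prod>i<k. mvar i ^ 2) = Poly_Mapping.single (Ek k) 1"
proof (induct k)
  case 0 then show ?case by (simp add: Ek_def)
next
  case (Suc k)
  have "mvar k ^ 2 = Poly_Mapping.single (Poly_Mapping.single k 2) 1"
  proof -
    have "Poly_Mapping.single k (1::nat) + Poly_Mapping.single k 1 = Poly_Mapping.single k 2"
      by (metis one_add_one single_add)
    then show ?thesis by (simp add: mvar_def power2_eq_square mult_single)
  qed
  then show ?case using Suc by (simp add: Ek_def mult_single)
qed

definition pp :: "nat \<Rightarrow> mpoly" where "pp k = Poly_Mapping.single (Ek k) 1 * rr"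

lemma pp_expand: "pp k = Poly_Mapping.single (Ek k + ma) 1 + Poly_Mapping.single (Ek k + mb) 1 +
   Poly_Mapping.single (Ek k + mc) 1 + Poly_Mapping.single (Ek k + md) (-3)"
  by (simp add: pp_def rr_def distrib_left mult_single)

lemma keys_pp: "Poly_Mapping.keys (pp k) \<subseteq> (\<lambda>n. Ek k + n) ` {ma, mb, mc, md}"
  unfolding pp_def using keys_single_mult[of "Ek k" 1 rr] keys_rr by blast

lemma lookup_mons: "x \<in> {ma, mb, mc, md} \<Longrightarrow> Poly_Mapping.lookup x i = 0 \<or> i \<in> {1,2,3}"
  by (auto simp: lookup_ma lookup_mb lookup_mc lookup_md split: if_splits)

lemma mons_0: "x \<in> {ma, mb, mc, md} \<Longrightarrow> Poly_Mapping.lookup x 0 = 0"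
  by (auto simp: lookup_ma lookup_mb lookup_mc lookup_md)

lemma mons_even: "x \<in> {ma, mb, mc, md} \<Longrightarrow> even (Poly_Mapping.lookup x i)"
  by (auto simp: lookup_ma lookup_mb lookup_mc lookup_md)

lemma mons_mdeg: "x \<in> {ma, mb, mc, md} \<Longrightarrow> mdeg x = 6"
  by (auto simp: ma_def mb_def mc_def md_def mdeg_add mdeg_single)

lemma pp_key_props:
  assumes k: "k \<ge> 4" and s: "s \<in> Poly_Mapping.keys (pp k)"
  shows "Poly_Mapping.keys s \<subseteq> {..<k}" "mdeg s = 2*k + 6" "\<forall>i. even (Poly_Mapping.lookup s i)"
    "Poly_Mapping.lookup s 0 = 2"
proof -
  obtain x where x: "x \<in> {ma, mb, mc, md}" and sx: "s = Ek k + x" using keys_pp s by blast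
  show "Poly_Mapping.keys s \<subseteq> {..<k}"
  proof
    fix i assume "i \<in> Poly_Mapping.keys s"
    then have "Poly_Mapping.lookup (Ek k) i + Poly_Mapping.lookup x i \<noteq> 0" by (simp add: sx in_keys_iff lookup_add)
    then show "i \<in> {..<k}" using lookup_mons[OF x, of i] k by (auto simp: lookup_Ek split: if_splits)
  qed
  show "mdeg s = 2*k + 6" using mons_mdeg[OF x] by (simp add: sx mdeg_add mdeg_Ek)
  show "\<forall>i. even (Poly_Mapping.lookup s i)" using mons_even[OF x] by (simp add: sx lookup_add lookup_Ek)
  show "Poly_Mapping.lookup s 0 = 2" using mons_0[OF x] k by (simp add: sx lookup_add lookup_Ek)
qed

lemma meval_pp: "meval (pp k) x = (\<Prod>i<k. x i ^ 2) *
   ((x 1 ^ 2)^2 * (x 2 ^ 2) + (x 2 ^ 2)^2 * (x 3 ^ 2) + (x 3 ^ 2)^2 * (x 1 ^ 2) - 3 * (x 1 ^ 2) * (x 2 ^ 2) * (x 3 ^ 2))"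
  by (simp add: pp_expand meval_add meval_single mono_add mono_Ek mono_single ma_def mb_def mc_def md_def
      algebra_simps power_mult[symmetric])

lemma Pk_pp: assumes "k \<ge> 4" shows "Pk k (pp k)"
  unfolding Pk_def in_vars_def homogeneous_def
proof (intro conjI allI)
  show "\<forall>m\<in>Poly_Mapping.keys (pp k). Poly_Mapping.keys m \<subseteq> {..<k}" using pp_key_props[OF assms] by blast
  show "\<exists>d. \<forall>m\<in>Poly_Mapping.keys (pp k). mdeg m = d" using pp_key_props[OF assms] by blast
  fix x :: "nat \<Rightarrow> real"
  have "0 \<le> (\<Prod>i<k. x i ^ 2)" by (intro prod_nonneg) auto
  moreover have "0 \<le> (x 1 ^ 2)^2 * (x 2 ^ 2) + (x 2 ^ 2)^2 * (x 3 ^ 2) + (x 3 ^ 2)^2 * (x 1 ^ 2) - 3 * (x 1 ^ 2) * (x 2 ^ 2) * (x 3 ^ 2)"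
    by (rule real_choi_lam) auto
  ultimately show "0 \<le> meval (pp k) x" unfolding meval_pp by simp
qed

lemma even_pp: assumes "k \<ge> 4" shows "even_poly (pp k)"
  unfolding even_poly_def using pp_key_props[OF assms] by blast

definition w1 :: "nat \<Rightarrow> (nat \<Rightarrow>\<^sub>0 nat) \<Rightarrow> int" where
  "w1 N m = int (N+1) * int (Poly_Mapping.lookup m 0) - int N * int (mdeg m)"

lemma w1_add: "w1 N (x + y) = w1 N x + w1 N y"
  by (simp add: w1_def lookup_add mdeg_add algebra_simps)

lemma w1_single0: "w1 N (Poly_Mapping.single 0 n) = int n"
  by (simp add: w1_def mdeg_single algebra_simps)

lemma pure_key:
  fixes q :: mpoly
  assumes "meval q (\<lambda>i. if i = 0 then 1 else 0) \<noteq> 0"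
  shows "\<exists>a. Poly_Mapping.single 0 a \<in> Poly_Mapping.keys q"
proof (rule ccontr)
  assume no: "\<not> ?thesis"
  have z: "(\<Prod>i\<in>Poly_Mapping.keys m. (if i = 0 then 1 else 0::real) ^ Poly_Mapping.lookup m i) = 0"
    if m: "m \<in> Poly_Mapping.keys q" for m
  proof -
    have "m \<noteq> Poly_Mapping.single 0 (Poly_Mapping.lookup m 0)" using no m by metis
    then obtain i where i: "Poly_Mapping.lookup m i \<noteq> Poly_Mapping.lookup (Poly_Mapping.single 0 (Poly_Mapping.lookup m 0)) i"
      using poly_mapping_eqI by metis
    then have i0: "i \<noteq> 0" "Poly_Mapping.lookup m i \<noteq> 0" by (auto simp: lookup_single when_def split: if_splits)
    then have "i \<in> Poly_Mapping.keys m" by (simp add: in_keys_iff)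
    moreover have "((if i = 0 then 1 else 0::real) ^ Poly_Mapping.lookup m i) = 0" using i0 by simp
    ultimately show ?thesis by (meson finite_keys prod_zero)
  qed
  have "meval q (\<lambda>i. if i = 0 then 1 else 0) = 0"
    unfolding meval_def by (rule sum.neutral) (simp add: z)
  with assms show False by simp
qed

lemma top_q:
  fixes q :: mpoly
  assumes A: "A = Max {a. Poly_Mapping.single 0 a \<in> Poly_Mapping.keys q}"
    and ex: "Poly_Mapping.single 0 a0 \<in> Poly_Mapping.keys q"
    and N: "N = 1 + (\<Sum>m\<in>Poly_Mapping.keys q. mdeg m)"
  shows "Poly_Mapping.single 0 A \<in> Poly_Mapping.keys q"
    "\<forall>m\<in>Poly_Mapping.keys q. w1 N m \<le> int A"
    "\<forall>m\<in>Poly_Mapping.keys q. w1 N m = int A \<longrightarrow> m = Poly_Mapping.single 0 A"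
proof -
  have fin: "finite {a. Poly_Mapping.single 0 a \<in> Poly_Mapping.keys q}"
    by (rule finite_subset[of _ "(\<lambda>m. Poly_Mapping.lookup m 0) ` Poly_Mapping.keys q"]) force+
  show "Poly_Mapping.single 0 A \<in> Poly_Mapping.keys q" using Max_in[OF fin] ex A by auto
  have main: "w1 N m \<le> int A \<and> (w1 N m = int A \<longrightarrow> m = Poly_Mapping.single 0 A)"
    if m: "m \<in> Poly_Mapping.keys q" for m
  proof (cases "Poly_Mapping.keys m \<subseteq> {0}")
    case True
    have meq: "m = Poly_Mapping.single 0 (Poly_Mapping.lookup m 0)"
    proof (rule poly_mapping_eqI)
      fix i show "Poly_Mapping.lookup m i = Poly_Mapping.lookup (Poly_Mapping.single 0 (Poly_Mapping.lookup m 0)) i"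
      proof (cases "i = 0")
        case False
        then have "i \<notin> Poly_Mapping.keys m" using True by blast
        then show ?thesis using False by (simp add: in_keys_iff lookup_single)
      qed simp
    qed
    have "Poly_Mapping.lookup m 0 \<in> {a. Poly_Mapping.single 0 a \<in> Poly_Mapping.keys q}" using m meq by simp
    then have le: "Poly_Mapping.lookup m 0 \<le> A" using Max_ge[OF fin] A by blast
    have w: "w1 N m = int (Poly_Mapping.lookup m 0)" by (subst meq) (simp only: w1_single0)
    show ?thesis using le w meq by auto
  next
    case False
    then obtain i where i: "i \<in> Poly_Mapping.keys m" "i \<noteq> 0" by blast
    have "mdeg m = (\<Sum>j\<in>Poly_Mapping.keys m \<union> {0}. Poly_Mapping.lookup m j)"
      by (rule mdeg_superset) auto
    also have "\<dots> \<ge> (\<Sum>j\<in>{0,i}. Poly_Mapping.lookup m j)"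
      by (rule sum_mono2) (use i in auto)
    finally have D1: "mdeg m \<ge> Poly_Mapping.lookup m 0 + Poly_Mapping.lookup m i" using i by simp
    have "Poly_Mapping.lookup m i \<ge> 1" using i by (simp add: in_keys_iff)
    with D1 have D2: "mdeg m \<ge> Poly_Mapping.lookup m 0 + 1" by linarith
    have "mdeg m \<le> (\<Sum>m\<in>Poly_Mapping.keys q. mdeg m)" by (rule member_le_sum) (use m in auto)
    then have D3: "mdeg m < N" using N by linarith
    have "int N * int (mdeg m) \<ge> int N * (int (Poly_Mapping.lookup m 0) + 1)"
      by (rule mult_left_mono) (use D2 in auto)
    then have "w1 N m < 0" unfolding w1_def using D2 D3 by (simp add: algebra_simps)
    then show ?thesis by auto
  qed
  show "\<forall>m\<in>Poly_Mapping.keys q. w1 N m \<le> int A" using main by blast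
  show "\<forall>m\<in>Poly_Mapping.keys q. w1 N m = int A \<longrightarrow> m = Poly_Mapping.single 0 A" using main by blast
qed

lemma core:
  fixes q :: mpoly
  assumes k: "k \<ge> 4" and hs: "q^2 * pp k = sum_list (map (\<lambda>q. q^2) hs)"
    and ev: "meval q (\<lambda>i. if i = 0 then 1 else 0) \<noteq> 0"
  shows False
proof -
  obtain a0 where a0: "Poly_Mapping.single 0 a0 \<in> Poly_Mapping.keys q" using pure_key[OF ev] by blast
  define A where "A = Max {a. Poly_Mapping.single 0 a \<in> Poly_Mapping.keys q}"
  define N where "N = 1 + (\<Sum>m\<in>Poly_Mapping.keys q. mdeg m)"
  note tq = top_q[OF A_def a0 N_def]
  define w where "w = w1 N"
  have wadd: "\<And>x y. w (x+y) = w x + w y" by (simp add: w_def w1_add)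
  define c where "c = Poly_Mapping.lookup q (Poly_Mapping.single 0 A)"
  have c0: "c \<noteq> 0" using tq(1) by (simp add: c_def in_keys_iff)
  define Wp where "Wp = int (N+1) * 2 - int N * int (2*k+6)"
  have wp: "\<forall>s\<in>Poly_Mapping.keys (pp k). w s = Wp"
    using pp_key_props[OF k] by (simp add: w_def w1_def Wp_def)
  have wq: "\<forall>m\<in>Poly_Mapping.keys q. w m \<le> int A" using tq(2) by (simp add: w_def)
  have fq: "face w (int A) q = Poly_Mapping.single (Poly_Mapping.single 0 A) c"
  proof (rule poly_mapping_eqI)
    fix m
    show "Poly_Mapping.lookup (face w (int A) q) m = Poly_Mapping.lookup (Poly_Mapping.single (Poly_Mapping.single 0 A) c) m"
    proof (cases "m = Poly_Mapping.single 0 A")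
      case True
      then show ?thesis by (simp add: lookup_face w_def w1_single0 c_def)
    next
      case False
      have "(Poly_Mapping.lookup q m when w m = int A) = 0"
        using tq(3) False by (cases "m \<in> Poly_Mapping.keys q") (auto simp: w_def in_keys_iff when_def)
      then show ?thesis using False by (simp add: lookup_face lookup_single when_def)
    qed
  qed
  have fp: "face w Wp (pp k) = pp k"
  proof (rule poly_mapping_eqI)
    fix m
    show "Poly_Mapping.lookup (face w Wp (pp k)) m = Poly_Mapping.lookup (pp k) m"
      using wp by (cases "m \<in> Poly_Mapping.keys (pp k)") (auto simp: lookup_face in_keys_iff)
  qed
  have kqq: "\<forall>s\<in>Poly_Mapping.keys (q*q). w s \<le> int A + int A"
  proof
    fix s assume "s \<in> Poly_Mapping.keys (q*q)"
    then obtain a b where "s = a + b" "a \<in> Poly_Mapping.keys q" "b \<in> Poly_Mapping.keys q"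
      using keys_mult by blast
    moreover have "w a \<le> int A" "w b \<le> int A" using wq \<open>a \<in> _\<close> \<open>b \<in> _\<close> by auto
    ultimately show "w s \<le> int A + int A" using wadd by simp
  qed
  have wpl: "\<forall>s\<in>Poly_Mapping.keys (pp k). w s \<le> Wp" using wp by simp
  have ff: "face w (int A + int A + Wp) (q*q*pp k) = face w (int A) q * face w (int A) q * pp k"
    using face_mult[OF wadd kqq wpl] face_mult[OF wadd wq wq] fp by simp
  define V where "V = int A + (int N + 1) - int N * (int k + 3)"
  have VV: "V + V = int A + int A + Wp" by (simp add: V_def Wp_def algebra_simps)
  have kF: "\<forall>s\<in>Poly_Mapping.keys (sum_list (map (\<lambda>q. q^2) hs)). w s \<le> V + V"
  proof
    fix s assume "s \<in> Poly_Mapping.keys (sum_list (map (\<lambda>q. q^2) hs))"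
    then have "s \<in> Poly_Mapping.keys (q*q*pp k)" using hs by (simp add: power2_eq_square)
    then obtain a b where "s = a + b" "a \<in> Poly_Mapping.keys (q*q)" "b \<in> Poly_Mapping.keys (pp k)"
      using keys_mult by blast
    then show "w s \<le> V + V" using kqq wpl wadd VV by (simp add: add_mono)
  qed
  have hV: "\<forall>g\<in>set hs. \<forall>m\<in>Poly_Mapping.keys g. w m \<le> V"
    using newton[OF wadd kF] by force
  define gs where "gs = map (face w V) hs"
  define M where "M = Poly_Mapping.single 0 A + Poly_Mapping.single 0 A + Ek k"
  define G where "G = sum_list (map (\<lambda>q. q^2) gs)"
  have Geq: "G = Poly_Mapping.single M (c*c) * rr"
  proof -
    have "G = face w (V+V) (sum_list (map (\<lambda>q. q^2) hs))"
      using face_sumsq[OF wadd hV] by (simp add: G_def gs_def o_def)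
    also have "\<dots> = face w (int A + int A + Wp) (q*q*pp k)" using hs VV by (simp add: power2_eq_square)
    also have "\<dots> = Poly_Mapping.single (Poly_Mapping.single 0 A) c * Poly_Mapping.single (Poly_Mapping.single 0 A) c * (Poly_Mapping.single (Ek k) 1 * rr)"
      using ff fq by (simp add: pp_def)
    also have "\<dots> = Poly_Mapping.single M (c*c) * rr" by (simp add: mult_single M_def mult.assoc[symmetric])
    finally show ?thesis .
  qed
  have keysG: "\<forall>s\<in>Poly_Mapping.keys G. \<exists>x\<in>{ma,mb,mc,md}. s = M + x"
    using keys_single_mult[of M "c*c" rr] keys_rr unfolding Geq by blast
  have lookupG: "Poly_Mapping.lookup G (M + md) = c*c*(-3)"
    unfolding Geq lookup_single_mult lookup_rr_md ..
  have lookupM: "Poly_Mapping.lookup M i = (if i = 0 then 2*A else 0) + (if i < k then 2 else 0)" for i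
    by (simp add: M_def lookup_add lookup_single lookup_Ek when_def)
  have NW: "\<forall>g\<in>set gs. \<forall>m\<in>Poly_Mapping.keys g. 2 * w' m \<le> T"
    if "\<And>x y. w' (x+y) = w' x + w' y" "\<forall>s\<in>Poly_Mapping.keys G. w' s \<le> T" for w' :: "(nat \<Rightarrow>\<^sub>0 nat) \<Rightarrow> int" and T
    using newton[of w' gs T] that unfolding G_def by blast
  have pair: "\<forall>g\<in>set gs. \<forall>a\<in>Poly_Mapping.keys g. \<forall>b\<in>Poly_Mapping.keys g. a + b = M + md \<longrightarrow> a = b"
  proof (intro ballI impI)
    fix g a b assume g: "g \<in> set gs" and a: "a \<in> Poly_Mapping.keys g" and b: "b \<in> Poly_Mapping.keys g"
      and ab: "a + b = M + md"
    have abi: "Poly_Mapping.lookup a i + Poly_Mapping.lookup b i = Poly_Mapping.lookup M i + Poly_Mapping.lookup md i" for i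
      using arg_cong[OF ab, of "\<lambda>x. Poly_Mapping.lookup x i"] by (simp add: lookup_add)
    have M123: "Poly_Mapping.lookup M j = 2" if "j \<in> {1,2,3}" for j using that k by (auto simp: lookupM)
    define w12 where "w12 m = int (Poly_Mapping.lookup m 1) - int (Poly_Mapping.lookup m 2)" for m :: "nat \<Rightarrow>\<^sub>0 nat"
    define w23 where "w23 m = int (Poly_Mapping.lookup m 2) - int (Poly_Mapping.lookup m 3)" for m :: "nat \<Rightarrow>\<^sub>0 nat"
    define w31 where "w31 m = int (Poly_Mapping.lookup m 3) - int (Poly_Mapping.lookup m 1)" for m :: "nat \<Rightarrow>\<^sub>0 nat"
    define ws where "ws m = int (Poly_Mapping.lookup m 1) + int (Poly_Mapping.lookup m 2) + int (Poly_Mapping.lookup m 3)" for m :: "nat \<Rightarrow>\<^sub>0 nat"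
    have kv: "w12 s \<le> 2 \<and> w23 s \<le> 2 \<and> w31 s \<le> 2 \<and> ws s \<le> 12" if "s \<in> Poly_Mapping.keys G" for s
    proof -
      have "\<exists>x\<in>{ma,mb,mc,md}. s = M + x" using keysG that by (rule bspec)
          then obtain x where x: "x \<in> {ma,mb,mc,md}" "s = M + x" by (elim bexE) simp
      have m1: "Poly_Mapping.lookup M 1 = 2" "Poly_Mapping.lookup M 2 = 2" "Poly_Mapping.lookup M 3 = 2" using M123 by auto
      show ?thesis using x m1 by (auto simp: w12_def w23_def w31_def ws_def lookup_add lookup_ma lookup_mb lookup_mc lookup_md)
    qed
    have n12: "2 * w12 a \<le> 2" "2 * w12 b \<le> 2"
      using NW[of w12 2] kv g a b by (auto simp: w12_def lookup_add)
    have n23: "2 * w23 a \<le> 2" "2 * w23 b \<le> 2"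
      using NW[of w23 2] kv g a b by (auto simp: w23_def lookup_add)
    have n31: "2 * w31 a \<le> 2" "2 * w31 b \<le> 2"
      using NW[of w31 2] kv g a b by (auto simp: w31_def lookup_add)
    have ns: "2 * ws a \<le> 12" "2 * ws b \<le> 12"
      using NW[of ws 12] kv g a b by (auto simp: ws_def lookup_add)
    have s123: "Poly_Mapping.lookup a j + Poly_Mapping.lookup b j = 4" if "j \<in> {1,2,3}" for j
      using abi[of j] M123[OF that] that by (auto simp: lookup_md)
    have all2: "Poly_Mapping.lookup a j = 2 \<and> Poly_Mapping.lookup b j = 2" if "j \<in> {1,2,3}" for j
    proof -
      have e1: "Poly_Mapping.lookup a 1 + Poly_Mapping.lookup b 1 = 4" using s123 by simp
      have e2: "Poly_Mapping.lookup a 2 + Poly_Mapping.lookup b 2 = 4" using s123 by simp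
      have e3: "Poly_Mapping.lookup a 3 + Poly_Mapping.lookup b 3 = 4" using s123 by simp
      show ?thesis using that e1 e2 e3 n12 n23 n31 ns unfolding w12_def w23_def w31_def ws_def by auto
    qed
    show "a = b"
    proof (rule poly_mapping_eqI)
      fix i
      show "Poly_Mapping.lookup a i = Poly_Mapping.lookup b i"
      proof (cases "i \<in> {1,2,3}")
        case True
        then show ?thesis using all2 by auto
      next
        case False
        let ?w = "\<lambda>m::nat \<Rightarrow>\<^sub>0 nat. int (Poly_Mapping.lookup m i)"
        have "?w s \<le> int (Poly_Mapping.lookup M i)" if "s \<in> Poly_Mapping.keys G" for s
        proof -
          have "\<exists>x\<in>{ma,mb,mc,md}. s = M + x" using keysG that by (rule bspec)
          then obtain x where x: "x \<in> {ma,mb,mc,md}" "s = M + x" by (elim bexE) simp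
          then have "Poly_Mapping.lookup x i = 0" using lookup_mons[OF x(1), of i] False by auto
          then show ?thesis using x by (simp add: lookup_add)
        qed
        then have "\<forall>g\<in>set gs. \<forall>m\<in>Poly_Mapping.keys g. 2 * ?w m \<le> int (Poly_Mapping.lookup M i)"
          by (intro NW) (auto simp: lookup_add)
        then have "2 * Poly_Mapping.lookup a i \<le> Poly_Mapping.lookup M i" "2 * Poly_Mapping.lookup b i \<le> Poly_Mapping.lookup M i"
          using g a b by force+
        moreover have "Poly_Mapping.lookup md i = 0" using False by (simp add: lookup_md)
        ultimately show ?thesis using abi[of i] by linarith
      qed
    qed
  qed
  have "0 \<le> Poly_Mapping.lookup G (M + md)" unfolding G_def by (rule pair_nonneg[OF pair])
  moreover have "c * c > 0" using c0 not_real_square_gt_zero by blast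
  ultimately show False unfolding lookupG by linarith
qed

lemma meval_one: "meval 1 x = 1"
  by (simp add: meval_def)

theorem lemma3p3:
  fixes k :: nat
  assumes "k \<ge> 4"
  shows "\<exists>p. even_poly p \<and> Deltak k p \<and>
           (\<exists>r. in_vars k r \<and> p = (\<Prod>i<k. mvar i ^ 2) * r) \<and>
           bad_point k p (\<lambda>i. if i = 0 then 1 else 0)"
proof (intro exI conjI)
  have core': "meval q (\<lambda>i. if i = 0 then 1 else 0) = 0" if "Sigmak k (q^2 * pp k)" for q
  proof (rule ccontr)
    assume ne: "meval q (\<lambda>i. if i = 0 then 1 else 0) \<noteq> 0"
    from that obtain qs where "q^2 * pp k = sum_list (map (\<lambda>q. q^2) qs)" unfolding Sigmak_def by blast
    then show False using core[OF assms _ ne] by blast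
  qed
  show "even_poly (pp k)" using even_pp[OF assms] .
  show "Deltak k (pp k)"
    unfolding Deltak_def
  proof
    show "Pk k (pp k)" using Pk_pp[OF assms] .
    show "\<not> Sigmak k (pp k)"
    proof
      assume "Sigmak k (pp k)"
      then have "Sigmak k (1^2 * pp k)" by simp
      then have "meval 1 (\<lambda>i. if i = 0 then 1 else 0) = 0" by (rule core')
      then show False by (simp add: meval_one)
    qed
  qed
  show "in_vars k rr"
    unfolding in_vars_def
  proof
    fix m assume "m \<in> Poly_Mapping.keys rr"
    then have m: "m \<in> {ma, mb, mc, md}" using keys_rr by blast
    show "Poly_Mapping.keys m \<subseteq> {..<k}"
    proof
      fix i assume "i \<in> Poly_Mapping.keys m"
      then have "i \<in> {1,2,3}" using lookup_mons[OF m, of i] by (auto simp: in_keys_iff)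
      then show "i \<in> {..<k}" using assms by auto
    qed
  qed
  show "pp k = (\<Prod>i<k. mvar i ^ 2) * rr" by (simp add: prod_mvar pp_def)
  show "bad_point k (pp k) (\<lambda>i. if i = 0 then 1 else 0)"
    unfolding bad_point_def using Pk_pp[OF assms] core' by blast
qed

end
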